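(* Let $\mathfrak{p}$ be a finitely generated proper prime ideal of $\mathcal{S}'(\mathbb{Z}^{d})$. Then there exists $\mathbf{n}_*\in\mathbb{Z}^d$ such that $\mathfrak{p}=\{f\in\mathcal{S}'(\mathbb{Z}^{d}): f(\mathbf{n}_* )=0\}$.
   Context: For $\mathbf{n}=(n_1,\dots,n_d)\in\mathbb{Z}^d$ write $\|\mathbf{n}\|:=|n_1|+\cdots+|n_d|$. $\mathcal{S}'(\mathbb{Z}^{d})$ denotes the set of all maps $f:\mathbb{Z}^d\to\mathbb{C}$ of at most polynomial growth, i.e. for which there exist a real $M>0$ and an integer $m\geq 0$ with $|f(\mathbf{n})|\leq M(1+\|\mathbf{n}\|)^m$ for all $\mathbf{n}\in\mathbb{Z}^d$. It is a commutative unital ring under pointwise addition and multiplication, with unit the constant function $1$. *)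

theory Defs
  imports "HOL-Analysis.Analysis"
begin

text \<open>Lattice points of Z^d are modelled as int ^ 'd for a finite index type 'd
  (d = CARD('d)). The l1-norm of a lattice point.\<close>
definition l1norm :: "int ^ 'd::finite \<Rightarrow> int" where
  "l1norm n = (\<Sum>i\<in>UNIV. \<bar>n $ i\<bar>)"

text \<open>The ring S'(Z^d) of complex-valued maps of at most polynomial growth
  (pointwise operations, unit the constant function 1).\<close>
definition Sprime :: "(int ^ 'd::finite \<Rightarrow> complex) set" where
  "Sprime = {f. \<exists>M::real. M > 0 \<and> (\<exists>m::nat. \<forall>n. cmod (f n) \<le> M * (1 + real_of_int (l1norm n)) ^ m)}"

definition is_ideal_S :: "(int ^ 'd::finite \<Rightarrow> complex) set \<Rightarrow> bool" where
  "is_ideal_S I \<longleftrightarrow> I \<subseteq> Sprime \<and> (\<lambda>_. 0) \<in> I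
     \<and> (\<forall>a\<in>I. \<forall>b\<in>I. (\<lambda>n. a n + b n) \<in> I)
     \<and> (\<forall>a\<in>I. \<forall>r\<in>Sprime. (\<lambda>n. r n * a n) \<in> I)"

definition is_prime_ideal_S :: "(int ^ 'd::finite \<Rightarrow> complex) set \<Rightarrow> bool" where
  "is_prime_ideal_S P \<longleftrightarrow> is_ideal_S P \<and> (\<lambda>_. 1) \<notin> P
     \<and> (\<forall>a\<in>Sprime. \<forall>b\<in>Sprime. (\<lambda>n. a n * b n) \<in> P \<longrightarrow> a \<in> P \<or> b \<in> P)"

definition fin_gen_S :: "(int ^ 'd::finite \<Rightarrow> complex) set \<Rightarrow> bool" where
  "fin_gen_S I \<longleftrightarrow> (\<exists>gs. set gs \<subseteq> Sprime \<and>
     I = {(\<lambda>n. \<Sum>i<length gs. r i n * (gs ! i) n) | r. \<forall>i<length gs. r i \<in> Sprime})"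

end

theory Submission
  imports Defs
begin

lemma l1norm_nonneg: "l1norm n \<ge> 0"
  unfolding l1norm_def by (simp add: sum_nonneg)

lemma base_ge1: "(1::real) \<le> (1 + real_of_int (l1norm n)) ^ m"
  using l1norm_nonneg[of n] by (intro one_le_power) simp

lemma bounded_Sprime:
  assumes "\<And>n. cmod (f n) \<le> B"
  shows "f \<in> Sprime"
proof -
  have "\<forall>n. cmod (f n) \<le> max B 1 * (1 + real_of_int (l1norm n)) ^ 0"
    using assms by (simp add: le_max_iff_disj)
  then show ?thesis unfolding Sprime_def
    by (intro CollectI exI[of _ "max B 1"] conjI exI[of _ 0]) auto
qed

lemma common_bound:
  fixes k :: nat and r :: "nat \<Rightarrow> int ^ 'd::finite \<Rightarrow> complex"
  assumes "\<forall>i<k. r i \<in> Sprime"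
  shows "\<exists>M>0. \<exists>m::nat. \<forall>i<k. \<forall>n. cmod (r i n) \<le> M * (1 + real_of_int (l1norm n)) ^ m"
  using assms
proof (induction k)
  case 0
  then show ?case by (intro exI[of _ 1]) auto
next
  case (Suc k)
  then obtain M m where M: "M > 0" "\<forall>i<k. \<forall>n. cmod (r i n) \<le> M * (1 + real_of_int (l1norm n)) ^ m"
    by auto
  from Suc.prems have "r k \<in> Sprime" by auto
  then obtain M2 m2 where M2: "M2 > 0" "\<forall>n. cmod (r k n) \<le> M2 * (1 + real_of_int (l1norm n)) ^ m2"
    unfolding Sprime_def by auto
  have mono: "(1 + real_of_int (l1norm n)) ^ a \<le> (1 + real_of_int (l1norm n)) ^ max a b"
    "(1 + real_of_int (l1norm n)) ^ b \<le> (1 + real_of_int (l1norm n)) ^ max a b" for n :: "int ^ 'd" and a b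
    using l1norm_nonneg[of n] by (auto intro!: power_increasing)
  have "\<forall>i<Suc k. \<forall>n. cmod (r i n) \<le> max M M2 * (1 + real_of_int (l1norm n)) ^ max m m2"
  proof (intro allI impI)
    fix i and n :: "int ^ 'd" assume i: "i < Suc k"
    have p: "0 \<le> (1 + real_of_int (l1norm n)) ^ a" for a
      using l1norm_nonneg[of n] by simp
    show "cmod (r i n) \<le> max M M2 * (1 + real_of_int (l1norm n)) ^ max m m2"
    proof (cases "i = k")
      case True
      have "cmod (r i n) \<le> M2 * (1 + real_of_int (l1norm n)) ^ m2" using M2 True by auto
      also have "\<dots> \<le> max M M2 * (1 + real_of_int (l1norm n)) ^ max m m2"
        by (intro mult_mono mono p) (use M2 in auto)
      finally show ?thesis .
    next
      case False
      have "cmod (r i n) \<le> M * (1 + real_of_int (l1norm n)) ^ m" using M False i by auto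
      also have "\<dots> \<le> max M M2 * (1 + real_of_int (l1norm n)) ^ max m m2"
        by (intro mult_mono mono p) (use M in auto)
      finally show ?thesis .
    qed
  qed
  then show ?case using M by (intro exI[of _ "max M M2"]) auto
qed

lemma cnj_div_lemma:
  assumes "z \<noteq> 0"
  shows "cnj z / complex_of_real (cmod z) * z = complex_of_real (cmod z)"
proof -
  have "cnj z / complex_of_real (cmod z) * z = (z * cnj z) / complex_of_real (cmod z)" by (simp add: field_simps)
  also have "\<dots> = complex_of_real ((cmod z)^2) / complex_of_real (cmod z)" by (simp only: complex_norm_square)
  also have "\<dots> = complex_of_real (cmod z)" using assms by (simp add: power2_eq_square)
  finally show ?thesis .
qed

theorem theorem4p1:
  fixes P :: "(int ^ 'd::finite \<Rightarrow> complex) set"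
  assumes "is_prime_ideal_S P"
    and "fin_gen_S P"
  shows "\<exists>n0 :: int ^ 'd. P = {f \<in> Sprime. f n0 = 0}"
proof -
  have PS: "P \<subseteq> Sprime" and add: "\<And>a b. a \<in> P \<Longrightarrow> b \<in> P \<Longrightarrow> (\<lambda>n. a n + b n) \<in> P"
    and mul: "\<And>a r. a \<in> P \<Longrightarrow> r \<in> Sprime \<Longrightarrow> (\<lambda>n. r n * a n) \<in> P"
    and one: "(\<lambda>_. 1) \<notin> P"
    and prime: "\<And>a b. a \<in> Sprime \<Longrightarrow> b \<in> Sprime \<Longrightarrow> (\<lambda>n. a n * b n) \<in> P \<Longrightarrow> a \<in> P \<or> b \<in> P"
    and zero: "(\<lambda>_. 0) \<in> P"
    using assms(1) unfolding is_prime_ideal_S_def is_ideal_S_def by blast+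
  define dl :: "int ^ 'd \<Rightarrow> int ^ 'd \<Rightarrow> complex" where "dl n0 n = (if n = n0 then 1 else 0)" for n0 n
  have dlS: "dl n0 \<in> Sprime" for n0
    by (rule bounded_Sprime[of _ 1]) (simp add: dl_def)
  have dlcS: "(\<lambda>n. 1 - dl n0 n) \<in> Sprime" for n0
    by (rule bounded_Sprime[of _ 1]) (simp add: dl_def)
  show ?thesis
  proof (cases "\<exists>n0. (\<lambda>n. 1 - dl n0 n) \<in> P")
    case True
    then obtain n0 where n0: "(\<lambda>n. 1 - dl n0 n) \<in> P" by blast
    have "P = {f \<in> Sprime. f n0 = 0}"
    proof (intro equalityI subsetI)
      fix f assume f: "f \<in> {f \<in> Sprime. f n0 = 0}"
      have "(\<lambda>n. f n * (1 - dl n0 n)) \<in> P" using mul[OF n0, of f] f by simp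
      moreover have "(\<lambda>n. f n * (1 - dl n0 n)) = f" using f by (auto simp: dl_def)
      ultimately show "f \<in> P" by simp
    next
      fix f assume f: "f \<in> P"
      have "f n0 = 0"
      proof (rule ccontr)
        assume nz: "f n0 \<noteq> 0"
        define r where "r n = (if n = n0 then 1 / f n0 else 0)" for n
        have "r \<in> Sprime" by (rule bounded_Sprime[of _ "cmod (1 / f n0)"]) (simp add: r_def)
        from mul[OF f this] have "(\<lambda>n. r n * f n) \<in> P" .
        moreover have "(\<lambda>n. r n * f n) = dl n0" using nz by (auto simp: r_def dl_def)
        ultimately have "dl n0 \<in> P" by simp
        from add[OF this n0] have "(\<lambda>n. dl n0 n + (1 - dl n0 n)) \<in> P" .
        then show False using one by simp
      qed
      then show "f \<in> {f \<in> Sprime. f n0 = 0}" using f PS by auto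
    qed
    then show ?thesis by blast
  next
    case False
    have dlP: "dl n0 \<in> P" for n0
    proof -
      have "(\<lambda>n. dl n0 n * (1 - dl n0 n)) = (\<lambda>_. 0)" by (auto simp: dl_def)
      then have "(\<lambda>n. dl n0 n * (1 - dl n0 n)) \<in> P" using zero by simp
      then show ?thesis using prime[OF dlS dlcS] False by blast
    qed
    obtain gs where gsS: "set gs \<subseteq> Sprime" and Peq:
      "P = {(\<lambda>n. \<Sum>i<length gs. r i n * (gs ! i) n) | r. \<forall>i<length gs. r i \<in> Sprime}"
      using assms(2) unfolding fin_gen_S_def by blast
    define k where "k = length gs"
    define g where "g i = gs ! i" for i
    have Peq': "f \<in> P \<longleftrightarrow> (\<exists>r. (\<forall>i<k. r i \<in> Sprime) \<and> f = (\<lambda>n. \<Sum>i<k. r i n * g i n))" for f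
      unfolding Peq k_def g_def by blast
    define Hr where "Hr n = (\<Sum>i<k. cmod (g i n))" for n
    have Hr_nn: "Hr n \<ge> 0" for n unfolding Hr_def by (simp add: sum_nonneg)
    have HP: "(\<lambda>n. complex_of_real (Hr n)) \<in> P"
    proof -
      define r where "r i n = (if g i n = 0 then 0 else cnj (g i n) / complex_of_real (cmod (g i n)))" for i n
      have "r i \<in> Sprime" for i
        by (rule bounded_Sprime[of _ 1]) (simp add: r_def norm_divide)
      moreover have "r i n * g i n = complex_of_real (cmod (g i n))" for i n
        using cnj_div_lemma[of "g i n"] by (auto simp: r_def)
      ultimately show ?thesis unfolding Peq' Hr_def
        by (intro exI[of _ r]) (auto simp: fun_eq_iff)
    qed
    have Hpos: "Hr n > 0" for n
    proof (rule ccontr)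
      assume "\<not> Hr n > 0"
      then have "Hr n = 0" using Hr_nn[of n] by simp
      then have g0: "\<forall>i<k. g i n = 0" unfolding Hr_def by (simp add: sum_nonneg_eq_0_iff)
      obtain r where "dl n = (\<lambda>m. \<Sum>i<k. r i m * g i m)" using dlP[of n] unfolding Peq' by blast
      then have "dl n n = (\<Sum>i<k. r i n * g i n)" by simp
      also have "\<dots> = 0" using g0 by simp
      finally show False by (simp add: dl_def)
    qed
    define S where "S n = complex_of_real (sqrt (Hr n))" for n
    have HS: "(\<lambda>n. complex_of_real (Hr n)) \<in> Sprime" using HP PS by blast
    then obtain MH mH where MH: "MH > 0" "\<forall>n. cmod (complex_of_real (Hr n)) \<le> MH * (1 + real_of_int (l1norm n)) ^ mH"
      unfolding Sprime_def by blast
    have SS: "S \<in> Sprime"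
      unfolding Sprime_def
    proof (intro CollectI exI[of _ "1 + MH"] conjI exI[of _ mH] allI)
      fix n :: "int ^ 'd"
      have b: "1 \<le> (1 + real_of_int (l1norm n)) ^ mH" by (rule base_ge1)
      have "cmod (S n) = sqrt (Hr n)" using Hr_nn[of n] by (simp add: S_def)
      also have "\<dots> \<le> 1 + Hr n"
        using Hr_nn[of n] by (intro real_le_lsqrt) (auto simp: power2_eq_square algebra_simps)
      also have "\<dots> \<le> 1 + MH * (1 + real_of_int (l1norm n)) ^ mH" using spec[OF MH(2), of n] Hr_nn[of n] by auto
      also have "\<dots> \<le> (1 + MH) * (1 + real_of_int (l1norm n)) ^ mH" using b by (simp add: algebra_simps)
      finally show "cmod (S n) \<le> (1 + MH) * (1 + real_of_int (l1norm n)) ^ mH" .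
    qed (use MH in auto)
    have "(\<lambda>n. S n * S n) = (\<lambda>n. complex_of_real (Hr n))"
      using Hr_nn by (auto simp: S_def fun_eq_iff simp flip: of_real_mult)
    then have "S \<in> P" using prime[OF SS SS] HP by auto
    then obtain r where rS: "\<forall>i<k. r i \<in> Sprime" and Sr: "S = (\<lambda>n. \<Sum>i<k. r i n * g i n)"
      unfolding Peq' by blast
    obtain M m where M: "M > 0" "\<forall>i<k. \<forall>n. cmod (r i n) \<le> M * (1 + real_of_int (l1norm n)) ^ m"
      using common_bound[OF rS] by blast
    define B where "B n = M * (1 + real_of_int (l1norm n)) ^ m" for n :: "int ^ 'd"
    have Bnn: "B n \<ge> 0" for n :: "int ^ 'd" unfolding B_def using M(1) l1norm_nonneg[of n] by simp
    have key: "1 / Hr n \<le> M^2 * (1 + real_of_int (l1norm n)) ^ (2*m)" for n :: "int ^ 'd"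
    proof -
      have "sqrt (Hr n) = cmod (S n)" using Hr_nn[of n] by (simp add: S_def)
      also have "\<dots> = cmod (\<Sum>i<k. r i n * g i n)" using Sr by simp
      also have "\<dots> \<le> (\<Sum>i<k. cmod (r i n) * cmod (g i n))"
        by (rule order_trans[OF norm_sum]) (simp add: norm_mult)
      also have "\<dots> \<le> (\<Sum>i<k. B n * cmod (g i n))"
        by (intro sum_mono mult_right_mono) (use M(2) in \<open>auto simp: B_def\<close>)
      also have "\<dots> = B n * Hr n" by (simp add: Hr_def sum_distrib_left)
      finally have i1: "sqrt (Hr n) \<le> B n * Hr n" .
      have hp: "Hr n > 0" by (rule Hpos)
      have "Hr n = sqrt (Hr n) * sqrt (Hr n)" using hp by simp
      with i1 have "sqrt (Hr n) \<le> B n * sqrt (Hr n) * sqrt (Hr n)" by (simp add: mult.assoc)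
      then have "1 \<le> B n * sqrt (Hr n)" using hp by simp
      then have "1 \<le> (B n * sqrt (Hr n))^2" by (simp add: one_le_power)
      also have "\<dots> = (B n)^2 * Hr n" using hp by (simp add: power_mult_distrib)
      finally have "1 / Hr n \<le> (B n)^2" using hp by (simp add: field_simps)
      also have "\<dots> = M^2 * (1 + real_of_int (l1norm n)) ^ (2*m)"
        by (simp add: B_def power_mult_distrib power_mult[symmetric] mult.commute)
      finally show ?thesis .
    qed
    define u where "u n = complex_of_real (1 / Hr n)" for n
    have uS: "u \<in> Sprime" unfolding Sprime_def
    proof (intro CollectI exI[of _ "M^2"] conjI exI[of _ "2*m"] allI)
      fix n :: "int ^ 'd" show "cmod (u n) \<le> M^2 * (1 + real_of_int (l1norm n)) ^ (2*m)"
        using key[of n] Hpos[of n] by (simp add: u_def norm_divide)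
    qed (use M in auto)
    from mul[OF HP uS] have "(\<lambda>n. u n * complex_of_real (Hr n)) \<in> P" .
    moreover have "(\<lambda>n. u n * complex_of_real (Hr n)) = (\<lambda>_. 1)"
    proof
      fix n :: "int ^ 'd"
      have "Hr n \<noteq> 0" using Hpos[of n] by simp
      then show "u n * complex_of_real (Hr n) = 1" by (simp add: u_def field_simps)
    qed
    ultimately show ?thesis using one by simp
  qed
qed

end
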